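(* Let $\Sigma$ be a set. The free adequate monoid on $\Sigma$ is isomorphic to the free adequate semigroup on $\Sigma$ with a single adjoined element which is an identity for multiplication and a fixed point for $*$ and $+$.
   Context: For a semigroup $S$ let $S^1=S$ if $S$ is a monoid and otherwise $S$ with an identity adjoined. $a\,\mathcal{L}^*\,b$ iff for all $x,y\in S^1$: $ax=ay\Leftrightarrow bx=by$; $a\,\mathcal{R}^*\,b$ iff for all $x,y\in S^1$: $xa=ya\Leftrightarrow xb=yb$. $S$ is adequate if its idempotents commute and every $\mathcal{L}^*$-class and every $\mathcal{R}^*$-class contains an idempotent (necessarily unique); $x^+$ is the idempotent $\mathcal{R}^*$-related to $x$, $x^*$ the idempotent $\mathcal{L}^*$-related to $x$. Adequate semigroups are $(2,1,1)$-algebras (multiplication, $+$, $*$) and adequate monoids $(2,1,1,0)$-algebras (with the identity as constant); morphisms preserve all these operations. The free adequate semigroup [monoid] on $\Sigma$ is an adequate semigroup [monoid] containing $\Sigma$ such that every map from $\Sigma$ into an adequate semigroup [monoid] extends uniquely to a morphism; isomorphism here is as $(2,1,1,0)$-algebras. *)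

theory Defs
  imports Main
begin

record 'a adq =
  acarrier :: "'a set"
  amult    :: "'a \<Rightarrow> 'a \<Rightarrow> 'a"
  aplus    :: "'a \<Rightarrow> 'a"
  astar    :: "'a \<Rightarrow> 'a"

record 'a adqm = "'a adq" +
  aone :: 'a

definition semigroup_on :: "('a, 'm) adq_scheme \<Rightarrow> bool" where
  "semigroup_on S \<longleftrightarrow>
     (\<forall>x\<in>acarrier S. \<forall>y\<in>acarrier S. amult S x y \<in> acarrier S) \<and>
     (\<forall>x\<in>acarrier S. \<forall>y\<in>acarrier S. \<forall>z\<in>acarrier S.
        amult S (amult S x y) z = amult S x (amult S y z))"

text \<open>Elements of S^1 are encoded as options: None is the (adjoined) identity.
  Right and left multiplication by elements of S^1.\<close>

definition rmul1 :: "('a, 'm) adq_scheme \<Rightarrow> 'a \<Rightarrow> 'a option \<Rightarrow> 'a" where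
  "rmul1 S a x = (case x of None \<Rightarrow> a | Some y \<Rightarrow> amult S a y)"

definition lmul1 :: "('a, 'm) adq_scheme \<Rightarrow> 'a option \<Rightarrow> 'a \<Rightarrow> 'a" where
  "lmul1 S x a = (case x of None \<Rightarrow> a | Some y \<Rightarrow> amult S y a)"

definition S1 :: "('a, 'm) adq_scheme \<Rightarrow> 'a option set" where
  "S1 S = insert None (Some ` acarrier S)"

definition Lstar :: "('a, 'm) adq_scheme \<Rightarrow> 'a \<Rightarrow> 'a \<Rightarrow> bool" where
  "Lstar S a b \<longleftrightarrow> (\<forall>x\<in>S1 S. \<forall>y\<in>S1 S.
      rmul1 S a x = rmul1 S a y \<longleftrightarrow> rmul1 S b x = rmul1 S b y)"

definition Rstar :: "('a, 'm) adq_scheme \<Rightarrow> 'a \<Rightarrow> 'a \<Rightarrow> bool" where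
  "Rstar S a b \<longleftrightarrow> (\<forall>x\<in>S1 S. \<forall>y\<in>S1 S.
      lmul1 S x a = lmul1 S y a \<longleftrightarrow> lmul1 S x b = lmul1 S y b)"

definition idem :: "('a, 'm) adq_scheme \<Rightarrow> 'a \<Rightarrow> bool" where
  "idem S e \<longleftrightarrow> e \<in> acarrier S \<and> amult S e e = e"

definition adequate :: "('a, 'm) adq_scheme \<Rightarrow> bool" where
  "adequate S \<longleftrightarrow> semigroup_on S \<and>
     (\<forall>e f. idem S e \<and> idem S f \<longrightarrow> amult S e f = amult S f e) \<and>
     (\<forall>a\<in>acarrier S. idem S (aplus S a) \<and> Rstar S (aplus S a) a \<and>
                      idem S (astar S a) \<and> Lstar S (astar S a) a)"

definition adequate_monoid :: "('a, 'm) adqm_scheme \<Rightarrow> bool" where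
  "adequate_monoid M \<longleftrightarrow> adequate M \<and> aone M \<in> acarrier M \<and>
     (\<forall>x\<in>acarrier M. amult M (aone M) x = x \<and> amult M x (aone M) = x)"

definition adq_hom :: "('a, 'm) adq_scheme \<Rightarrow> ('b, 'n) adq_scheme \<Rightarrow> ('a \<Rightarrow> 'b) \<Rightarrow> bool" where
  "adq_hom S T h \<longleftrightarrow> (\<forall>x\<in>acarrier S. h x \<in> acarrier T) \<and>
     (\<forall>x\<in>acarrier S. \<forall>y\<in>acarrier S. h (amult S x y) = amult T (h x) (h y)) \<and>
     (\<forall>x\<in>acarrier S. h (aplus S x) = aplus T (h x) \<and> h (astar S x) = astar T (h x))"

definition adqm_hom :: "('a, 'm) adqm_scheme \<Rightarrow> ('b, 'n) adqm_scheme \<Rightarrow> ('a \<Rightarrow> 'b) \<Rightarrow> bool" where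
  "adqm_hom M N h \<longleftrightarrow> adq_hom M N h \<and> h (aone M) = aone N"

definition adqm_iso :: "('a, 'm) adqm_scheme \<Rightarrow> ('b, 'n) adqm_scheme \<Rightarrow> ('a \<Rightarrow> 'b) \<Rightarrow> bool" where
  "adqm_iso M N h \<longleftrightarrow> adqm_hom M N h \<and> bij_betw h (acarrier M) (acarrier N)"

section \<open>Free objects (universal property w.r.t. targets with carrier in type 'c)\<close>

definition free_adequate_semigroup ::
  "'c itself \<Rightarrow> 'x set \<Rightarrow> ('x \<Rightarrow> 'a) \<Rightarrow> 'a adq \<Rightarrow> bool" where
  "free_adequate_semigroup (_::'c itself) \<Sigma> \<iota> S \<longleftrightarrow>
     adequate S \<and> \<iota> ` \<Sigma> \<subseteq> acarrier S \<and> inj_on \<iota> \<Sigma> \<and>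
     (\<forall>(T::'c adq) f. adequate T \<and> f ` \<Sigma> \<subseteq> acarrier T \<longrightarrow>
        (\<exists>h. adq_hom S T h \<and> (\<forall>x\<in>\<Sigma>. h (\<iota> x) = f x)) \<and>
        (\<forall>h h'. adq_hom S T h \<and> (\<forall>x\<in>\<Sigma>. h (\<iota> x) = f x) \<and>
                adq_hom S T h' \<and> (\<forall>x\<in>\<Sigma>. h' (\<iota> x) = f x) \<longrightarrow>
                (\<forall>s\<in>acarrier S. h s = h' s)))"

definition free_adequate_monoid ::
  "'c itself \<Rightarrow> 'x set \<Rightarrow> ('x \<Rightarrow> 'a) \<Rightarrow> 'a adqm \<Rightarrow> bool" where
  "free_adequate_monoid (_::'c itself) \<Sigma> \<iota> M \<longleftrightarrow>
     adequate_monoid M \<and> \<iota> ` \<Sigma> \<subseteq> acarrier M \<and> inj_on \<iota> \<Sigma> \<and>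
     (\<forall>(T::'c adqm) f. adequate_monoid T \<and> f ` \<Sigma> \<subseteq> acarrier T \<longrightarrow>
        (\<exists>h. adqm_hom M T h \<and> (\<forall>x\<in>\<Sigma>. h (\<iota> x) = f x)) \<and>
        (\<forall>h h'. adqm_hom M T h \<and> (\<forall>x\<in>\<Sigma>. h (\<iota> x) = f x) \<and>
                adqm_hom M T h' \<and> (\<forall>x\<in>\<Sigma>. h' (\<iota> x) = f x) \<longrightarrow>
                (\<forall>s\<in>acarrier M. h s = h' s)))"

definition adjoin_one :: "'a adq \<Rightarrow> 'a option adqm" where
  "adjoin_one S =
     \<lparr> acarrier = insert None (Some ` acarrier S),
       amult = (\<lambda>x y. case x of None \<Rightarrow> y
                    | Some a \<Rightarrow> (case y of None \<Rightarrow> Some a | Some b \<Rightarrow> Some (amult S a b))),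
       aplus = (\<lambda>x. case x of None \<Rightarrow> None | Some a \<Rightarrow> Some (aplus S a)),
       astar = (\<lambda>x. case x of None \<Rightarrow> None | Some a \<Rightarrow> Some (astar S a)),
       aone = None \<rparr>"

end

theory Submission
  imports Defs
begin

definition trsp :: "('a \<Rightarrow> 'c) \<Rightarrow> ('c \<Rightarrow> 'a) \<Rightarrow> ('a,'m) adq_scheme \<Rightarrow> ('c,'n) adq_scheme \<Rightarrow> bool" where
 "trsp e r S T \<longleftrightarrow> acarrier T = e ` acarrier S \<and> (\<forall>x y. amult T x y = e (amult S (r x) (r y)))
   \<and> (\<forall>x. aplus T x = e (aplus S (r x))) \<and> (\<forall>x. astar T x = e (astar S (r x)))"


lemma ball_S1_map:
  assumes "trsp e r S T"
  shows "(\<forall>x\<in>S1 T. P x) \<longleftrightarrow> (\<forall>x\<in>S1 S. P (map_option e x))"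
  using assms unfolding trsp_def S1_def by auto


lemma trsp_rmul:
  assumes "trsp e r S T" "\<And>a. r (e a) = a"
  shows "rmul1 T (e a) (map_option e x) = e (rmul1 S a x)"
        "lmul1 T (map_option e x) (e a) = e (lmul1 S x a)"
  using assms unfolding trsp_def rmul1_def lmul1_def by (auto split: option.splits)


lemma trsp_Lstar:
  assumes "trsp e r S T" "\<And>a. r (e a) = a"
  shows "Lstar T (e a) (e b) \<longleftrightarrow> Lstar S a b" "Rstar T (e a) (e b) \<longleftrightarrow> Rstar S a b"
proof -
  have inj: "\<And>u v. e u = e v \<longleftrightarrow> u = v" by (metis assms(2))
  show "Lstar T (e a) (e b) \<longleftrightarrow> Lstar S a b"
    unfolding Lstar_def using ball_S1_map[OF assms(1)] trsp_rmul[OF assms] inj by simp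
  show "Rstar T (e a) (e b) \<longleftrightarrow> Rstar S a b"
    unfolding Rstar_def using ball_S1_map[OF assms(1)] trsp_rmul[OF assms] inj by simp
qed


lemma trsp_idem:
  assumes "trsp e r S T" "\<And>a. r (e a) = a"
  shows "idem T (e a) \<longleftrightarrow> idem S a"
proof -
  have inj: "\<And>u v. e u = e v \<longleftrightarrow> u = v" by (metis assms(2))
  have "e a \<in> e ` acarrier S \<longleftrightarrow> a \<in> acarrier S" by (metis assms(2) imageE imageI)
  then show ?thesis using assms unfolding idem_def trsp_def by (simp add: inj)
qed


lemma trsp_adequate:
  assumes "trsp e r S T" "\<And>a. r (e a) = a" "adequate S"
  shows "adequate T"
proof -
  have inj: "\<And>u v. e u = e v \<longleftrightarrow> u = v" by (metis assms(2))
  have c: "acarrier T = e ` acarrier S" using assms(1) unfolding trsp_def by (elim conjE)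
  have m0: "\<And>x y. amult T x y = e (amult S (r x) (r y))"
    "\<And>x. aplus T x = e (aplus S (r x))" "\<And>x. astar T x = e (astar S (r x))"
    using assms(1) unfolding trsp_def by simp_all
  have m: "\<And>a b. amult T (e a) (e b) = e (amult S a b)" by (simp add: m0 assms(2))
  have p: "\<And>a. aplus T (e a) = e (aplus S a)" "\<And>a. astar T (e a) = e (astar S a)"
    by (simp_all add: m0 assms(2))
  have sg: "semigroup_on S" and com: "\<forall>e f. idem S e \<and> idem S f \<longrightarrow> amult S e f = amult S f e"
   and ad: "\<forall>a\<in>acarrier S. idem S (aplus S a) \<and> Rstar S (aplus S a) a \<and>
                      idem S (astar S a) \<and> Lstar S (astar S a) a"
    using assms(3) unfolding adequate_def by blast+
  have "semigroup_on T" using sg unfolding semigroup_on_def c by (simp add: m)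
  moreover have "\<forall>x f. idem T x \<and> idem T f \<longrightarrow> amult T x f = amult T f x"
  proof (intro allI impI)
    fix x f assume h: "idem T x \<and> idem T f"
    then have "x \<in> e ` acarrier S" "f \<in> e ` acarrier S" using c unfolding idem_def by auto
    then obtain a b where ab: "x = e a" "f = e b" by blast
    then have "idem S a" "idem S b" using h trsp_idem[OF assms(1,2)] by auto
    then show "amult T x f = amult T f x" using com ab by (simp add: m)
  qed
  moreover have "\<forall>x\<in>acarrier T. idem T (aplus T x) \<and> Rstar T (aplus T x) x \<and>
                      idem T (astar T x) \<and> Lstar T (astar T x) x"
  proof
    fix x assume "x \<in> acarrier T"
    then obtain a where a: "a \<in> acarrier S" "x = e a" using c by blast
    show "idem T (aplus T x) \<and> Rstar T (aplus T x) x \<and> idem T (astar T x) \<and> Lstar T (astar T x) x"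
      using ad a by (simp add: p trsp_idem[OF assms(1,2)] trsp_Lstar[OF assms(1,2)])
  qed
  ultimately show ?thesis unfolding adequate_def by blast
qed

lemma trsp_hom_back:
  assumes "trsp e r T T'" "\<And>a. r (e a) = a" "adq_hom S T' h"
  shows "adq_hom S T (r \<circ> h)"
proof -
  have c: "acarrier T' = e ` acarrier T" using assms(1) unfolding trsp_def by (elim conjE)
  have m: "\<And>x y. amult T' x y = e (amult T (r x) (r y))"
    "\<And>x. aplus T' x = e (aplus T (r x))" "\<And>x. astar T' x = e (astar T (r x))"
    using assms(1) unfolding trsp_def by simp_all
  have h1: "\<forall>x\<in>acarrier S. h x \<in> acarrier T'" 
    "\<forall>x\<in>acarrier S. \<forall>y\<in>acarrier S. h (amult S x y) = amult T' (h x) (h y)"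
    "\<forall>x\<in>acarrier S. h (aplus S x) = aplus T' (h x) \<and> h (astar S x) = astar T' (h x)"
    using assms(3) unfolding adq_hom_def by blast+
  have hc: "\<And>x. x \<in> acarrier S \<Longrightarrow> r (h x) \<in> acarrier T" 
  proof -
    fix x assume "x \<in> acarrier S"
    then have "h x \<in> e ` acarrier T" using h1(1) c by simp
    then obtain t where "t \<in> acarrier T" "h x = e t" by blast
    then show "r (h x) \<in> acarrier T" using assms(2) by simp
  qed
  have hm: "\<And>x y. x \<in> acarrier S \<Longrightarrow> y \<in> acarrier S \<Longrightarrow> r (h (amult S x y)) = amult T (r (h x)) (r (h y))"
    using h1(2) by (simp add: m assms(2))
  have hp: "\<And>x. x \<in> acarrier S \<Longrightarrow> r (h (aplus S x)) = aplus T (r (h x)) \<and> r (h (astar S x)) = astar T (r (h x))"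
    using h1(3) by (simp add: m assms(2))
  show ?thesis unfolding adq_hom_def using hc hm hp by simp
qed

lemma trsp_hom_fwd:
  assumes "trsp e r T T'" "\<And>a. r (e a) = a" "adq_hom S T h"
  shows "adq_hom S T' (e \<circ> h)"
proof -
  have c: "acarrier T' = e ` acarrier T" using assms(1) unfolding trsp_def by (elim conjE)
  have m: "\<And>x y. amult T' x y = e (amult T (r x) (r y))"
    "\<And>x. aplus T' x = e (aplus T (r x))" "\<And>x. astar T' x = e (astar T (r x))"
    using assms(1) unfolding trsp_def by simp_all
  have h1: "\<forall>x\<in>acarrier S. h x \<in> acarrier T" 
    "\<forall>x\<in>acarrier S. \<forall>y\<in>acarrier S. h (amult S x y) = amult T (h x) (h y)"
    "\<forall>x\<in>acarrier S. h (aplus S x) = aplus T (h x) \<and> h (astar S x) = astar T (h x)"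
    using assms(3) unfolding adq_hom_def by blast+
  show ?thesis unfolding adq_hom_def c using h1 by (simp add: m assms(2))
qed


lemma adj_simps:
  "acarrier (adjoin_one S) = insert None (Some ` acarrier S)"
  "amult (adjoin_one S) None y = y"
  "amult (adjoin_one S) x None = x"
  "amult (adjoin_one S) (Some a) (Some b) = Some (amult S a b)"
  "aplus (adjoin_one S) None = None" "aplus (adjoin_one S) (Some a) = Some (aplus S a)"
  "astar (adjoin_one S) None = None" "astar (adjoin_one S) (Some a) = Some (astar S a)"
  "aone (adjoin_one S) = None"
  unfolding adjoin_one_def by (auto split: option.splits)

definition g1 :: "'a option option \<Rightarrow> 'a option" where
  "g1 x = (case x of Some (Some t) \<Rightarrow> Some t | _ \<Rightarrow> None)"

lemma ball_S1_adj:
  "(\<forall>x\<in>S1 (adjoin_one S). P (g1 x)) \<longleftrightarrow> (\<forall>y\<in>S1 S. P y)"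
  unfolding S1_def adj_simps g1_def by auto

lemma adj_mul1:
  "rmul1 (adjoin_one S) (Some a) x = Some (rmul1 S a (g1 x))"
  "lmul1 (adjoin_one S) x (Some a) = Some (lmul1 S (g1 x) a)"
  unfolding rmul1_def lmul1_def g1_def by (auto simp: adj_simps split: option.splits)


lemma g1_img: "g1 ` S1 (adjoin_one S) = S1 S"
proof
  show "g1 ` S1 (adjoin_one S) \<subseteq> S1 S" unfolding S1_def adj_simps g1_def by auto
  show "S1 S \<subseteq> g1 ` S1 (adjoin_one S)"
  proof
    fix y assume "y \<in> S1 S"
    then show "y \<in> g1 ` S1 (adjoin_one S)"
    proof (cases y)
      case None then show ?thesis unfolding S1_def g1_def by (simp add: image_iff)
    next
      case (Some t) then have "t \<in> acarrier S" using \<open>y \<in> S1 S\<close> unfolding S1_def by auto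
      then have "Some (Some t) \<in> S1 (adjoin_one S)" unfolding S1_def adj_simps by auto
      then show ?thesis using Some unfolding g1_def by force
    qed
  qed
qed

lemma adj_Lstar:
  "Lstar (adjoin_one S) (Some a) (Some b) \<longleftrightarrow> Lstar S a b"
  "Rstar (adjoin_one S) (Some a) (Some b) \<longleftrightarrow> Rstar S a b"
proof -
  have 1: "\<And>Q. (\<forall>x\<in>S1 (adjoin_one S). \<forall>y\<in>S1 (adjoin_one S). Q (g1 x) (g1 y)) \<longleftrightarrow> (\<forall>x\<in>S1 S. \<forall>y\<in>S1 S. Q x y)"
  proof -
    fix Q
    have "(\<forall>x\<in>S1 (adjoin_one S). \<forall>y\<in>S1 (adjoin_one S). Q (g1 x) (g1 y)) \<longleftrightarrow> (\<forall>x\<in>g1 ` S1 (adjoin_one S). \<forall>y\<in>g1 ` S1 (adjoin_one S). Q x y)" by blast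
    then show "(\<forall>x\<in>S1 (adjoin_one S). \<forall>y\<in>S1 (adjoin_one S). Q (g1 x) (g1 y)) \<longleftrightarrow> (\<forall>x\<in>S1 S. \<forall>y\<in>S1 S. Q x y)"
      unfolding g1_img .
  qed
  show "Lstar (adjoin_one S) (Some a) (Some b) \<longleftrightarrow> Lstar S a b"
    unfolding Lstar_def adj_mul1 option.inject by (rule 1)
  show "Rstar (adjoin_one S) (Some a) (Some b) \<longleftrightarrow> Rstar S a b"
    unfolding Rstar_def adj_mul1 option.inject by (rule 1)
qed

lemma adj_idem: "idem (adjoin_one S) None" "idem (adjoin_one S) (Some a) \<longleftrightarrow> idem S a"
  unfolding idem_def adj_simps by auto


lemma adjoin_adequate_monoid:
  assumes "adequate S" shows "adequate_monoid (adjoin_one S)"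
proof -
  have sg: "semigroup_on S" and com: "\<forall>e f. idem S e \<and> idem S f \<longrightarrow> amult S e f = amult S f e"
   and ad: "\<forall>a\<in>acarrier S. idem S (aplus S a) \<and> Rstar S (aplus S a) a \<and>
                      idem S (astar S a) \<and> Lstar S (astar S a) a"
    using assms unfolding adequate_def by blast+
  have "semigroup_on (adjoin_one S)"
  proof -
    have c1: "\<forall>x\<in>acarrier S. \<forall>y\<in>acarrier S. amult S x y \<in> acarrier S"
     and a1: "\<forall>x\<in>acarrier S. \<forall>y\<in>acarrier S. \<forall>z\<in>acarrier S. amult S (amult S x y) z = amult S x (amult S y z)"
      using sg unfolding semigroup_on_def by blast+
    have "\<forall>x\<in>acarrier (adjoin_one S). \<forall>y\<in>acarrier (adjoin_one S). amult (adjoin_one S) x y \<in> acarrier (adjoin_one S)"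
      using c1 by (auto simp: adj_simps)
    moreover have "\<forall>x\<in>acarrier (adjoin_one S). \<forall>y\<in>acarrier (adjoin_one S). \<forall>z\<in>acarrier (adjoin_one S).
        amult (adjoin_one S) (amult (adjoin_one S) x y) z = amult (adjoin_one S) x (amult (adjoin_one S) y z)"
    proof (intro ballI)
      fix x y z assume "x \<in> acarrier (adjoin_one S)" "y \<in> acarrier (adjoin_one S)" "z \<in> acarrier (adjoin_one S)"
      then show "amult (adjoin_one S) (amult (adjoin_one S) x y) z = amult (adjoin_one S) x (amult (adjoin_one S) y z)"
        using a1 by (cases x; cases y; cases z) (auto simp add: adj_simps)
    qed
    ultimately show ?thesis unfolding semigroup_on_def by blast
  qed
  moreover have "\<forall>x f. idem (adjoin_one S) x \<and> idem (adjoin_one S) f \<longrightarrow> amult (adjoin_one S) x f = amult (adjoin_one S) f x"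
  proof (intro allI impI)
    fix x f assume h: "idem (adjoin_one S) x \<and> idem (adjoin_one S) f"
    show "amult (adjoin_one S) x f = amult (adjoin_one S) f x"
    proof (cases x; cases f)
      fix a b assume "x = Some a" "f = Some b"
      then show ?thesis using h com by (simp add: adj_idem adj_simps)
    qed (auto simp: adj_simps)
  qed
  moreover have "\<forall>x\<in>acarrier (adjoin_one S). idem (adjoin_one S) (aplus (adjoin_one S) x) \<and> Rstar (adjoin_one S) (aplus (adjoin_one S) x) x \<and>
                      idem (adjoin_one S) (astar (adjoin_one S) x) \<and> Lstar (adjoin_one S) (astar (adjoin_one S) x) x"
  proof
    fix x assume x: "x \<in> acarrier (adjoin_one S)"
    show "idem (adjoin_one S) (aplus (adjoin_one S) x) \<and> Rstar (adjoin_one S) (aplus (adjoin_one S) x) x \<and>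
                      idem (adjoin_one S) (astar (adjoin_one S) x) \<and> Lstar (adjoin_one S) (astar (adjoin_one S) x) x"
    proof (cases x)
      case None
      have "Rstar (adjoin_one S) None None" "Lstar (adjoin_one S) None None"
        unfolding Rstar_def Lstar_def by blast+
      then show ?thesis using None by (simp add: adj_simps adj_idem)
    next
      case (Some a)
      then have "a \<in> acarrier S" using x by (auto simp: adj_simps)
      then show ?thesis using ad Some by (simp add: adj_simps adj_idem adj_Lstar)
    qed
  qed
  ultimately have "adequate (adjoin_one S)" unfolding adequate_def by blast
  then show ?thesis unfolding adequate_monoid_def by (simp add: adj_simps)
qed


lemma one_fixed:
  assumes "adequate_monoid M"
  shows "aplus M (aone M) = aone M" "astar M (aone M) = aone M"
proof -
  have ad: "adequate M" and o: "aone M \<in> acarrier M"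
   and u: "\<forall>x\<in>acarrier M. amult M (aone M) x = x \<and> amult M x (aone M) = x"
    using assms unfolding adequate_monoid_def by blast+
  have "idem M (aplus M (aone M))" "Rstar M (aplus M (aone M)) (aone M)"
       "idem M (astar M (aone M))" "Lstar M (astar M (aone M)) (aone M)"
    using ad o unfolding adequate_def by blast+
  note h = this
  let ?p = "aplus M (aone M)"
  have "lmul1 M (Some ?p) ?p = lmul1 M None ?p" using h(1) unfolding lmul1_def idem_def by simp
  moreover have "Some ?p \<in> S1 M" "None \<in> S1 M" using h(1) unfolding S1_def idem_def by auto
  ultimately have "lmul1 M (Some ?p) (aone M) = lmul1 M None (aone M)"
    using h(2) unfolding Rstar_def by blast
  then have "amult M ?p (aone M) = aone M" unfolding lmul1_def by simp
  then show "?p = aone M" using u h(1) unfolding idem_def by simp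
  let ?s = "astar M (aone M)"
  have "rmul1 M ?s (Some ?s) = rmul1 M ?s None" using h(3) unfolding rmul1_def idem_def by simp
  moreover have "Some ?s \<in> S1 M" "None \<in> S1 M" using h(3) unfolding S1_def idem_def by auto
  ultimately have "rmul1 M (aone M) (Some ?s) = rmul1 M (aone M) None"
    using h(4) unfolding Lstar_def by blast
  then have "amult M (aone M) ?s = aone M" unfolding rmul1_def by simp
  then show "?s = aone M" using u h(3) unfolding idem_def by simp
qed


definition tra :: "('a \<Rightarrow> 'c) \<Rightarrow> ('c \<Rightarrow> 'a) \<Rightarrow> ('a,'m) adq_scheme \<Rightarrow> 'c adq" where
 "tra e r S = \<lparr>acarrier = e ` acarrier S, amult = (\<lambda>x y. e (amult S (r x) (r y))),
     aplus = (\<lambda>x. e (aplus S (r x))), astar = (\<lambda>x. e (astar S (r x)))\<rparr>"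

definition tram :: "('a \<Rightarrow> 'c) \<Rightarrow> ('c \<Rightarrow> 'a) \<Rightarrow> ('a,'m) adqm_scheme \<Rightarrow> 'c adqm" where
 "tram e r S = \<lparr>acarrier = e ` acarrier S, amult = (\<lambda>x y. e (amult S (r x) (r y))),
     aplus = (\<lambda>x. e (aplus S (r x))), astar = (\<lambda>x. e (astar S (r x))), aone = e (aone S)\<rparr>"

lemma trsp_tra: "trsp e r S (tra e r S)" unfolding trsp_def tra_def by simp
lemma trsp_tram: "trsp e r S (tram e r S)" unfolding trsp_def tram_def by simp
lemma aone_tram: "aone (tram e r S) = e (aone S)" unfolding tram_def by simp

lemma tram_adequate_monoid:
  assumes "\<And>a. r (e a) = a" "adequate_monoid M"
  shows "adequate_monoid (tram e r M)"
proof -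
  have ad: "adequate M" and o: "aone M \<in> acarrier M"
   and u: "\<forall>x\<in>acarrier M. amult M (aone M) x = x \<and> amult M x (aone M) = x"
    using assms(2) unfolding adequate_monoid_def by blast+
  have "adequate (tram e r M)" using trsp_adequate[OF trsp_tram[of e r M] assms(1) ad] .
  moreover have "aone (tram e r M) \<in> acarrier (tram e r M)" using o unfolding tram_def by simp
  moreover have "\<forall>x\<in>acarrier (tram e r M). amult (tram e r M) (aone (tram e r M)) x = x \<and> amult (tram e r M) x (aone (tram e r M)) = x"
    using u unfolding tram_def by (auto simp: assms(1))
  ultimately show ?thesis unfolding adequate_monoid_def by blast
qed

lemma tram_hom_back:
  assumes "\<And>a. r (e a) = a" "adqm_hom N (tram e r T) h"
  shows "adqm_hom N T (r \<circ> h)"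
proof -
  have "adq_hom N (tram e r T) h" "h (aone N) = e (aone T)" using assms(2) unfolding adqm_hom_def aone_tram by blast+
  then show ?thesis using trsp_hom_back[OF trsp_tram[of e r T] assms(1), of N h] unfolding adqm_hom_def by (simp add: assms(1))
qed

lemma tram_hom_fwd:
  assumes "\<And>a. r (e a) = a" "adqm_hom N T h"
  shows "adqm_hom N (tram e r T) (e \<circ> h)"
proof -
  have "adq_hom N T h" "h (aone N) = aone T" using assms(2) unfolding adqm_hom_def by blast+
  then show ?thesis using trsp_hom_fwd[OF trsp_tram[of e r T] assms(1), of N h] unfolding adqm_hom_def aone_tram by simp
qed

lemma adq_hom_comp:
  assumes "adq_hom A B f" "adq_hom B C g"
  shows "adq_hom A C (g \<circ> f)"
proof -
  have f: "\<forall>x\<in>acarrier A. f x \<in> acarrier B" 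
    "\<forall>x\<in>acarrier A. \<forall>y\<in>acarrier A. f (amult A x y) = amult B (f x) (f y)"
    "\<forall>x\<in>acarrier A. f (aplus A x) = aplus B (f x) \<and> f (astar A x) = astar B (f x)"
    using assms(1) unfolding adq_hom_def by blast+
  have g: "\<forall>x\<in>acarrier B. g x \<in> acarrier C" 
    "\<forall>x\<in>acarrier B. \<forall>y\<in>acarrier B. g (amult B x y) = amult C (g x) (g y)"
    "\<forall>x\<in>acarrier B. g (aplus B x) = aplus C (g x) \<and> g (astar B x) = astar C (g x)"
    using assms(2) unfolding adq_hom_def by blast+
  show ?thesis unfolding adq_hom_def using f g by simp
qed

lemma adqm_hom_comp:
  assumes "adqm_hom A B f" "adqm_hom B C g"
  shows "adqm_hom A C (g \<circ> f)"
  using assms adq_hom_comp unfolding adqm_hom_def by fastforce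

lemma some_hom: "adq_hom S (adjoin_one S) Some"
  unfolding adq_hom_def by (simp add: adj_simps)

lemma psi1_hom:
  assumes "adequate_monoid M" "adq_hom S M \<psi>"
  shows "adqm_hom (adjoin_one S) M (\<lambda>u. case u of None \<Rightarrow> aone M | Some s \<Rightarrow> \<psi> s)"
proof -
  let ?p = "\<lambda>u. case u of None \<Rightarrow> aone M | Some s \<Rightarrow> \<psi> s"
  have o: "aone M \<in> acarrier M"
   and u: "\<forall>x\<in>acarrier M. amult M (aone M) x = x \<and> amult M x (aone M) = x"
    using assms(1) unfolding adequate_monoid_def by blast+
  have f: "\<forall>x\<in>acarrier S. \<psi> x \<in> acarrier M" 
    "\<forall>x\<in>acarrier S. \<forall>y\<in>acarrier S. \<psi> (amult S x y) = amult M (\<psi> x) (\<psi> y)"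
    "\<forall>x\<in>acarrier S. \<psi> (aplus S x) = aplus M (\<psi> x) \<and> \<psi> (astar S x) = astar M (\<psi> x)"
    using assms(2) unfolding adq_hom_def by blast+
  have of: "aplus M (aone M) = aone M" "astar M (aone M) = aone M" using one_fixed[OF assms(1)] by simp_all
  have c: "\<forall>x\<in>acarrier (adjoin_one S). ?p x \<in> acarrier M"
    using o f(1) by (auto simp: adj_simps)
  have m: "\<forall>x\<in>acarrier (adjoin_one S). \<forall>y\<in>acarrier (adjoin_one S).
      ?p (amult (adjoin_one S) x y) = amult M (?p x) (?p y)"
  proof (intro ballI)
    fix x y assume xy: "x \<in> acarrier (adjoin_one S)" "y \<in> acarrier (adjoin_one S)"
    then have "?p x \<in> acarrier M" "?p y \<in> acarrier M" using c by blast+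
    then show "?p (amult (adjoin_one S) x y) = amult M (?p x) (?p y)"
      using xy u f(2) by (cases x; cases y) (auto simp: adj_simps)
  qed
  have p: "\<forall>x\<in>acarrier (adjoin_one S). ?p (aplus (adjoin_one S) x) = aplus M (?p x) \<and> ?p (astar (adjoin_one S) x) = astar M (?p x)"
  proof
    fix x assume "x \<in> acarrier (adjoin_one S)"
    then show "?p (aplus (adjoin_one S) x) = aplus M (?p x) \<and> ?p (astar (adjoin_one S) x) = astar M (?p x)"
      using f(3) of by (cases x) (auto simp: adj_simps)
  qed
  show ?thesis unfolding adqm_hom_def adq_hom_def using c m p by (simp add: adj_simps)
qed



theorem proposition2p2:
  fixes \<Sigma> :: "'x set"
    and \<iota>M :: "'x \<Rightarrow> 'a" and M :: "'a adqm"
    and \<iota>S :: "'x \<Rightarrow> 'b" and S :: "'b adq"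
  assumes "free_adequate_monoid TYPE('a + 'b option) \<Sigma> \<iota>M M"
    and "free_adequate_semigroup TYPE('a + 'b option) \<Sigma> \<iota>S S"
  shows "\<exists>h. adqm_iso M (adjoin_one S) h"
proof -
  define rl :: "'a + 'b option \<Rightarrow> 'a" where "rl = (\<lambda>z. case z of Inl a \<Rightarrow> a | Inr _ \<Rightarrow> undefined)"
  define rr :: "'a + 'b option \<Rightarrow> 'b option" where "rr = (\<lambda>z. case z of Inr a \<Rightarrow> a | Inl _ \<Rightarrow> None)"
  have rl: "\<And>a. rl (Inl a) = a" unfolding rl_def by simp
  have rr: "\<And>a. rr (Inr a) = a" unfolding rr_def by simp
  let ?O = "adjoin_one S"
  note fm = assms(1)[unfolded free_adequate_monoid_def]
  note fs = assms(2)[unfolded free_adequate_semigroup_def]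
  have admM: "adequate_monoid M" using fm by (rule conjunct1)
  have iM: "\<iota>M ` \<Sigma> \<subseteq> acarrier M" using fm[THEN conjunct2] by (rule conjunct1)
  note uM = fm[THEN conjunct2, THEN conjunct2, THEN conjunct2]
  have adS: "adequate S" using fs by (rule conjunct1)
  have iS: "\<iota>S ` \<Sigma> \<subseteq> acarrier S" using fs[THEN conjunct2] by (rule conjunct1)
  note uS = fs[THEN conjunct2, THEN conjunct2, THEN conjunct2]
  have admO: "adequate_monoid ?O" using adjoin_adequate_monoid[OF adS] .
  have adM: "adequate M" using admM unfolding adequate_monoid_def by blast
  have adO: "adequate ?O" using admO unfolding adequate_monoid_def by blast
  define T1 where "T1 = tram Inr rr ?O"
  have T1: "adequate_monoid T1" unfolding T1_def using tram_adequate_monoid[where e=Inr and r=rr, OF rr admO] .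
  have sub1: "(\<lambda>x. Inr (Some (\<iota>S x))) ` \<Sigma> \<subseteq> acarrier T1"
    using iS unfolding T1_def tram_def by (auto simp: adj_simps)
  obtain \<phi>' where \<phi>': "adqm_hom M T1 \<phi>'" "\<forall>x\<in>\<Sigma>. \<phi>' (\<iota>M x) = Inr (Some (\<iota>S x))"
    using uM[rule_format, OF conjI[OF T1 sub1], THEN conjunct1] by blast
  define \<phi> where "\<phi> = rr \<circ> \<phi>'"
  have \<phi>: "adqm_hom M ?O \<phi>" unfolding \<phi>_def using tram_hom_back[where e=Inr and r=rr, OF rr \<phi>'(1)[unfolded T1_def]] .
  have \<phi>g: "\<forall>x\<in>\<Sigma>. \<phi> (\<iota>M x) = Some (\<iota>S x)" using \<phi>'(2) unfolding \<phi>_def by (simp add: rr)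
  define T2 where "T2 = tra Inl rl M"
  have T2: "adequate T2" unfolding T2_def using trsp_adequate[OF trsp_tra[of Inl rl M] rl adM] .
  have sub2: "(\<lambda>x. Inl (\<iota>M x)) ` \<Sigma> \<subseteq> acarrier T2"
    using iM unfolding T2_def tra_def by auto
  obtain \<psi>' where \<psi>': "adq_hom S T2 \<psi>'" "\<forall>x\<in>\<Sigma>. \<psi>' (\<iota>S x) = Inl (\<iota>M x)"
    using uS[rule_format, OF conjI[OF T2 sub2], THEN conjunct1] by blast
  define \<psi> where "\<psi> = rl \<circ> \<psi>'"
  have \<psi>: "adq_hom S M \<psi>" unfolding \<psi>_def
    using trsp_hom_back[OF trsp_tra[of Inl rl M] rl \<psi>'(1)[unfolded T2_def]] .
  have \<psi>g: "\<forall>x\<in>\<Sigma>. \<psi> (\<iota>S x) = \<iota>M x" using \<psi>'(2) unfolding \<psi>_def by (simp add: rl)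
  define \<psi>1 where "\<psi>1 = (\<lambda>u. case u of None \<Rightarrow> aone M | Some s \<Rightarrow> \<psi> s)"
  have \<psi>1: "adqm_hom ?O M \<psi>1" unfolding \<psi>1_def using psi1_hom[OF admM \<psi>] .
  define T3 where "T3 = tram Inl rl M"
  have T3: "adequate_monoid T3" unfolding T3_def using tram_adequate_monoid[where e=Inl and r=rl, OF rl admM] .
  have sub3: "(\<lambda>x. Inl (\<iota>M x)) ` \<Sigma> \<subseteq> acarrier T3"
    using iM unfolding T3_def tram_def by auto
  have u3: "\<forall>h h'. adqm_hom M T3 h \<and> (\<forall>x\<in>\<Sigma>. h (\<iota>M x) = Inl (\<iota>M x)) \<and>
                adqm_hom M T3 h' \<and> (\<forall>x\<in>\<Sigma>. h' (\<iota>M x) = Inl (\<iota>M x)) \<longrightarrow>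
                (\<forall>s\<in>acarrier M. h s = h' s)"
    using uM[rule_format, OF conjI[OF T3 sub3], THEN conjunct2] by blast
  have h3a: "adqm_hom M T3 (Inl \<circ> (\<psi>1 \<circ> \<phi>))" unfolding T3_def
    using tram_hom_fwd[where e=Inl and r=rl, OF rl adqm_hom_comp[OF \<phi> \<psi>1]] .
  have idM: "adqm_hom M M id"
  proof -
    have "semigroup_on M" using adM unfolding adequate_def by blast
    then have "\<forall>x\<in>acarrier M. \<forall>y\<in>acarrier M. amult M x y \<in> acarrier M" unfolding semigroup_on_def by blast
    then show ?thesis unfolding adqm_hom_def adq_hom_def by simp
  qed
  have h3b: "adqm_hom M T3 (Inl \<circ> id)" unfolding T3_def
    using tram_hom_fwd[where e=Inl and r=rl, OF rl idM] .
  have g3a: "\<forall>x\<in>\<Sigma>. ((Inl :: 'a \<Rightarrow> 'a + 'b option) \<circ> (\<psi>1 \<circ> \<phi>)) (\<iota>M x) = Inl (\<iota>M x)"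
    using \<phi>g \<psi>g unfolding \<psi>1_def by simp
  have g3b: "\<forall>x\<in>\<Sigma>. ((Inl :: 'a \<Rightarrow> 'a + 'b option) \<circ> id) (\<iota>M x) = Inl (\<iota>M x)" by simp
  have "\<forall>s\<in>acarrier M. ((Inl :: 'a \<Rightarrow> 'a + 'b option) \<circ> (\<psi>1 \<circ> \<phi>)) s = ((Inl :: 'a \<Rightarrow> 'a + 'b option) \<circ> id) s"
  proof
    fix s assume "s \<in> acarrier M"
    then show "((Inl :: 'a \<Rightarrow> 'a + 'b option) \<circ> (\<psi>1 \<circ> \<phi>)) s = ((Inl :: 'a \<Rightarrow> 'a + 'b option) \<circ> id) s"
      by (rule u3[rule_format, OF conjI[OF h3a conjI[OF g3a conjI[OF h3b g3b]]]])
  qed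
  then have inv1: "\<forall>s\<in>acarrier M. \<psi>1 (\<phi> s) = s" by simp
  define T4 where "T4 = tra Inr rr ?O"
  have T4: "adequate T4" unfolding T4_def using trsp_adequate[OF trsp_tra[of Inr rr ?O] rr adO] .
  have sub4: "(\<lambda>x. Inr (Some (\<iota>S x))) ` \<Sigma> \<subseteq> acarrier T4"
    using iS unfolding T4_def tra_def by (auto simp: adj_simps)
  have u4: "\<forall>h h'. adq_hom S T4 h \<and> (\<forall>x\<in>\<Sigma>. h (\<iota>S x) = Inr (Some (\<iota>S x))) \<and>
                adq_hom S T4 h' \<and> (\<forall>x\<in>\<Sigma>. h' (\<iota>S x) = Inr (Some (\<iota>S x))) \<longrightarrow>
                (\<forall>s\<in>acarrier S. h s = h' s)"
    using uS[rule_format, OF conjI[OF T4 sub4], THEN conjunct2] by blast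
  have \<phi>a: "adq_hom M ?O \<phi>" using \<phi> unfolding adqm_hom_def by blast
  have h4a: "adq_hom S T4 ((Inr :: 'b option \<Rightarrow> 'a + 'b option) \<circ> (\<phi> \<circ> \<psi>))" unfolding T4_def
    using trsp_hom_fwd[OF trsp_tra[of Inr rr ?O] rr adq_hom_comp[OF \<psi> \<phi>a]] .
  have h4b: "adq_hom S T4 ((Inr :: 'b option \<Rightarrow> 'a + 'b option) \<circ> Some)" unfolding T4_def
    using trsp_hom_fwd[OF trsp_tra[of Inr rr ?O] rr some_hom] .
  have g4a: "\<forall>x\<in>\<Sigma>. ((Inr :: 'b option \<Rightarrow> 'a + 'b option) \<circ> (\<phi> \<circ> \<psi>)) (\<iota>S x) = Inr (Some (\<iota>S x))"
    using \<phi>g \<psi>g by simp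
  have g4b: "\<forall>x\<in>\<Sigma>. ((Inr :: 'b option \<Rightarrow> 'a + 'b option) \<circ> Some) (\<iota>S x) = Inr (Some (\<iota>S x))" by simp
  have "\<forall>s\<in>acarrier S. ((Inr :: 'b option \<Rightarrow> 'a + 'b option) \<circ> (\<phi> \<circ> \<psi>)) s = ((Inr :: 'b option \<Rightarrow> 'a + 'b option) \<circ> Some) s"
  proof
    fix s assume "s \<in> acarrier S"
    then show "((Inr :: 'b option \<Rightarrow> 'a + 'b option) \<circ> (\<phi> \<circ> \<psi>)) s = ((Inr :: 'b option \<Rightarrow> 'a + 'b option) \<circ> Some) s"
      by (rule u4[rule_format, OF conjI[OF h4a conjI[OF g4a conjI[OF h4b g4b]]]])
  qed
  then have inv2: "\<forall>s\<in>acarrier S. \<phi> (\<psi> s) = Some s" by simp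
  have \<phi>1: "\<phi> (aone M) = None" using \<phi> unfolding adqm_hom_def by (simp add: adj_simps)
  have inv2': "\<forall>u\<in>acarrier ?O. \<phi> (\<psi>1 u) = u"
  proof
    fix u assume u: "u \<in> acarrier ?O"
    show "\<phi> (\<psi>1 u) = u"
    proof (cases u)
      case None then show ?thesis using \<phi>1 unfolding \<psi>1_def by simp
    next
      case (Some s) then have "s \<in> acarrier S" using u by (auto simp: adj_simps)
      then show ?thesis using inv2 Some unfolding \<psi>1_def by simp
    qed
  qed
  have c1: "\<phi> ` acarrier M \<subseteq> acarrier ?O" using \<phi> unfolding adqm_hom_def adq_hom_def by blast
  have c2: "\<psi>1 ` acarrier ?O \<subseteq> acarrier M" using \<psi>1 unfolding adqm_hom_def adq_hom_def by blast
  have "bij_betw \<phi> (acarrier M) (acarrier ?O)"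
    using bij_betw_byWitness[OF inv1 inv2' c1 c2] .
  then have "adqm_iso M ?O \<phi>" unfolding adqm_iso_def using \<phi> by blast
  then show ?thesis by blast
qed

end
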